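(* Let $h_1,h_2:(0,\infty)\to\mathbb{R}$ be convex, bounded and decreasing, with $\lim_{x\to0}h_1(x)=\lim_{x\to0}h_2(x)$. Then every connected component $I\ne(0,\infty)$ of $X(h_1,h_2)$ satisfies $I\cap\operatorname{supp}(h_1)\ne\varnothing$, and every connected component $I\ne(0,\infty)$ of $X(h_2,h_1)$ satisfies $I\cap\operatorname{supp}(h_2)\ne\varnothing$.
   Context: $X(h_1,h_2):=\{x>0:h_1(x)<h_2(x)\}$ (an open subset of $(0,\infty)$). $\operatorname{supp}(h):=\{x>0:\text{for every open }U\ni x,\ h|_U\text{ is not affine}\}$. *)

theory Defs
  imports "HOL-Analysis.Analysis"
begin

text \<open>Functions (0,oo) -> R are modelled as total functions real => real;
  only their values on {0<..} matter.\<close>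

definition Xset :: "(real \<Rightarrow> real) \<Rightarrow> (real \<Rightarrow> real) \<Rightarrow> real set" where
  "Xset h1 h2 = {x. x > 0 \<and> h1 x < h2 x}"

definition affine_fun_on :: "real set \<Rightarrow> (real \<Rightarrow> real) \<Rightarrow> bool" where
  "affine_fun_on U h \<longleftrightarrow> (\<exists>a b. \<forall>y\<in>U. h y = a * y + b)"

definition supp :: "(real \<Rightarrow> real) \<Rightarrow> real set" where
  "supp h = {x. x > 0 \<and> (\<forall>U. open U \<and> x \<in> U \<longrightarrow> \<not> affine_fun_on (U \<inter> {0<..}) h)}"

end

theory Submission
  imports Defs
begin

lemma loc_affine:
  fixes h :: "real \<Rightarrow> real"
  assumes J: "open J" "connected J" "J \<subseteq> {0<..}" and ns: "\<forall>y\<in>J. y \<notin> supp h"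
  shows "\<exists>c d. \<forall>t\<in>J. h t = c*t + d"
proof -
  have D: "\<exists>V a. open V \<and> y \<in> V \<and> V \<subseteq> J \<and> (\<forall>z\<in>V. (h has_real_derivative a) (at z))"
    if y: "y \<in> J" for y
  proof -
    have "y > 0" using y J by auto
    with ns y obtain U where U: "open U" "y \<in> U" "affine_fun_on (U \<inter> {0<..}) h"
      unfolding supp_def by auto
    then obtain a b where ab: "\<forall>t\<in>U \<inter> {0<..}. h t = a*t+b" unfolding affine_fun_on_def by auto
    define V where "V = U \<inter> J"
    have "open V" using U J unfolding V_def by auto
    moreover have "\<forall>z\<in>V. (h has_real_derivative a) (at z)"
    proof
      fix z assume z: "z \<in> V"
      have "((\<lambda>t. a*t+b) has_real_derivative a) (at z)"
        by (auto intro!: derivative_eq_intros)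
      then show "(h has_real_derivative a) (at z)"
        apply (rule has_field_derivative_transform_within_open[OF _ \<open>open V\<close> z])
        using ab J unfolding V_def by auto
    qed
    ultimately show ?thesis using y U unfolding V_def by blast
  qed
  have D0: "(deriv h has_real_derivative 0) (at y)" if y: "y \<in> J" for y
  proof -
    obtain V a where V: "open V" "y \<in> V" "V \<subseteq> J" "\<forall>z\<in>V. (h has_real_derivative a) (at z)"
      using D[OF y] by blast
    have "((\<lambda>_. a) has_real_derivative 0) (at y)" by (rule DERIV_const)
    then show ?thesis
      apply (rule has_field_derivative_transform_within_open[OF _ V(1,2)])
      using V(4) DERIV_imp_deriv by metis
  qed
  have "continuous_on J (deriv h)"
    using D0 by (meson DERIV_isCont continuous_at_imp_continuous_on)
  then obtain c where c: "\<And>y. y \<in> J \<Longrightarrow> deriv h y = c"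
    using DERIV_zero_connected_constant[of J "{}" "deriv h"] D0 J by auto
  have Dc: "(h has_real_derivative c) (at y)" if y: "y \<in> J" for y
  proof -
    obtain V a where V: "open V" "y \<in> V" "V \<subseteq> J" "\<forall>z\<in>V. (h has_real_derivative a) (at z)"
      using D[OF y] by blast
    then have "deriv h y = a" using DERIV_imp_deriv by blast
    then show ?thesis using c[OF y] V by auto
  qed
  have Df: "((\<lambda>t. h t - c*t) has_real_derivative 0) (at y)" if y: "y \<in> J" for y
    using Dc[OF y] by (auto intro!: derivative_eq_intros)
  have "continuous_on J (\<lambda>t. h t - c*t)"
    using Df by (meson DERIV_isCont continuous_at_imp_continuous_on)
  then obtain d where d: "\<And>y. y \<in> J \<Longrightarrow> h y - c*y = d"
    using DERIV_zero_connected_constant[of J "{}" "\<lambda>t. h t - c*t"] Df J by auto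
  show ?thesis using d by (metis diff_add_cancel add.commute)
qed

lemma left_end:
  fixes X :: "real set"
  assumes "open X" "x \<in> X" "0 < s" "s < x" "s \<notin> X"
  shows "\<exists>a. 0 < a \<and> a < x \<and> a \<notin> X \<and> {a<..x} \<subseteq> X"
proof -
  define A where "A = {s. 0<s \<and> s \<le> x \<and> s \<notin> X}"
  define a where "a = Sup A"
  have sA: "s \<in> A" using assms unfolding A_def by auto
  have bdd: "bdd_above A" unfolding A_def bdd_above_def by auto
  have "s \<le> a" unfolding a_def using sA bdd by (rule cSup_upper)
  have "a \<le> x" unfolding a_def using sA by (intro cSup_least) (auto simp: A_def)
  have aX: "a \<notin> X"
  proof
    assume "a \<in> X"
    then obtain e where e: "e > 0" "ball a e \<subseteq> X" using assms(1) openE by blast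
    obtain u where u: "u \<in> A" "a - e < u" using less_cSupE[of "a - e" A] sA e unfolding a_def by force
    have "u \<le> a" unfolding a_def using u bdd by (intro cSup_upper)
    then have "u \<in> ball a e" using u e by (auto simp: dist_real_def)
    then show False using u e unfolding A_def by auto
  qed
  have "{a<..x} \<subseteq> X"
  proof
    fix t assume t: "t \<in> {a<..x}"
    show "t \<in> X"
    proof (rule ccontr)
      assume "t \<notin> X"
      then have "t \<in> A" using t \<open>s \<le> a\<close> assms unfolding A_def by auto
      then have "t \<le> a" unfolding a_def using bdd by (intro cSup_upper)
      then show False using t by auto
    qed
  qed
  moreover have "a < x" using \<open>a \<le> x\<close> aX assms by (cases "a = x") auto
  ultimately show ?thesis using aX \<open>s \<le> a\<close> assms by (intro exI[of _ a]) auto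
qed

lemma right_end:
  fixes X :: "real set"
  assumes "open X" "x \<in> X" "x < s" "s \<notin> X"
  shows "\<exists>b. x < b \<and> b \<notin> X \<and> {x..<b} \<subseteq> X"
proof -
  define A where "A = {s. x \<le> s \<and> s \<notin> X}"
  define b where "b = Inf A"
  have sA: "s \<in> A" using assms unfolding A_def by auto
  have bdd: "bdd_below A" unfolding A_def bdd_below_def by auto
  have "x \<le> b" unfolding b_def using sA by (intro cInf_greatest) (auto simp: A_def)
  have bX: "b \<notin> X"
  proof
    assume "b \<in> X"
    then obtain e where e: "e > 0" "ball b e \<subseteq> X" using assms(1) openE by blast
    obtain u where u: "u \<in> A" "u < b + e" using cInf_lessD[of A "b + e"] sA e unfolding b_def by force
    have "b \<le> u" unfolding b_def using u bdd by (intro cInf_lower)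
    then have "u \<in> ball b e" using u e by (auto simp: dist_real_def)
    then show False using u e unfolding A_def by auto
  qed
  have "{x..<b} \<subseteq> X"
  proof
    fix t assume t: "t \<in> {x..<b}"
    show "t \<in> X"
    proof (rule ccontr)
      assume "t \<notin> X"
      then have "t \<in> A" using t unfolding A_def by auto
      then have "b \<le> t" unfolding b_def using bdd by (intro cInf_lower)
      then show False using t by auto
    qed
  qed
  moreover have "x < b" using \<open>x \<le> b\<close> bX assms by (cases "b = x") auto
  ultimately show ?thesis using bX by auto
qed

lemma endpt_right:
  fixes h :: "real \<Rightarrow> real"
  assumes "isCont h p" "p < q" "\<forall>t\<in>{p<..<q}. h t = c*t+d"
  shows "h p = c*p+d"
proof -
  have "(h \<longlongrightarrow> h p) (at_right p)"
    using assms(1) unfolding isCont_def by (rule tendsto_mono[OF at_le, rotated]) auto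
  moreover have "eventually (\<lambda>t. h t = c*t+d) (at_right p)"
    using eventually_at_right_real[OF assms(2)] assms(3) by (auto elim: eventually_mono)
  ultimately have "((\<lambda>t. c*t+d) \<longlongrightarrow> h p) (at_right p)" by (rule Lim_transform_eventually)
  moreover have "((\<lambda>t. c*t+d) \<longlongrightarrow> c*p+d) (at_right p)" by (auto intro!: tendsto_eq_intros)
  ultimately show ?thesis using tendsto_unique trivial_limit_at_right_real by blast
qed

lemma endpt_left:
  fixes h :: "real \<Rightarrow> real"
  assumes "isCont h q" "p < q" "\<forall>t\<in>{p<..<q}. h t = c*t+d"
  shows "h q = c*q+d"
proof -
  have "(h \<longlongrightarrow> h q) (at_left q)"
    using assms(1) unfolding isCont_def by (rule tendsto_mono[OF at_le, rotated]) auto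
  moreover have "eventually (\<lambda>t. h t = c*t+d) (at_left q)"
    using eventually_at_left_real[OF assms(2)] assms(3) by (auto elim: eventually_mono)
  ultimately have "((\<lambda>t. c*t+d) \<longlongrightarrow> h q) (at_left q)" by (rule Lim_transform_eventually)
  moreover have "((\<lambda>t. c*t+d) \<longlongrightarrow> c*q+d) (at_left q)" by (auto intro!: tendsto_eq_intros)
  ultimately show ?thesis using tendsto_unique trivial_limit_at_left_real by blast
qed

lemma main:
  fixes h1 h2 :: "real \<Rightarrow> real"
  assumes conv1: "convex_on {0<..} h1" and conv2: "convex_on {0<..} h2"
    and bdd1: "bounded (h1 ` {0<..})"
    and dec2: "\<forall>x\<in>{0<..}. \<forall>y\<in>{0<..}. x \<le> y \<longrightarrow> h2 y \<le> h2 x"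
    and lim1: "(h1 \<longlongrightarrow> L) (at_right 0)" and lim2: "(h2 \<longlongrightarrow> L) (at_right 0)"
    and xX: "x \<in> Xset h1 h2"
    and CU: "connected_component_set (Xset h1 h2) x \<noteq> {0<..}"
  shows "connected_component_set (Xset h1 h2) x \<inter> supp h1 \<noteq> {}"
proof
  assume ns: "connected_component_set (Xset h1 h2) x \<inter> supp h1 = {}"
  define X where "X = Xset h1 h2"
  define C where "C = connected_component_set X x"
  have cont1: "continuous_on {0<..} h1" by (rule convex_on_continuous[OF _ conv1]) auto
  have cont2: "continuous_on {0<..} h2" by (rule convex_on_continuous[OF _ conv2]) auto
  have isC1: "isCont h1 p" if "p > 0" for p
    using cont1 that continuous_on_eq_continuous_at[OF open_greaterThan] by auto
  have Xeq: "X = {0<..} \<inter> (\<lambda>t. h2 t - h1 t) -` {0<..}"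
    unfolding X_def Xset_def by auto
  have openX: "open X" unfolding Xeq
    by (rule continuous_open_preimage) (auto intro!: continuous_intros cont1 cont2)
  have XS: "X \<subseteq> {0<..}" unfolding X_def Xset_def by auto
  have xX': "x \<in> X" using xX X_def by auto
  have lt: "h1 y < h2 y" if "y \<in> X" for y using that unfolding X_def Xset_def by auto
  have ge: "h2 y \<le> h1 y" if "y > 0" "y \<notin> X" for y using that unfolding X_def Xset_def by auto
  have x0: "x > 0" using xX' XS by auto
  have CX: "C \<subseteq> X" unfolding C_def by (rule connected_component_subset)
  have sub: "J \<subseteq> C" if "x \<in> J" "connected J" "J \<subseteq> X" for J
    unfolding C_def using that by (rule connected_component_maximal)
  have aff: "\<exists>c d. \<forall>t\<in>J. h1 t = c*t + d" if "open J" "x \<in> J" "connected J" "J \<subseteq> X" for J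
  proof (rule loc_affine)
    show "J \<subseteq> {0<..}" using that XS by auto
    show "\<forall>y\<in>J. y \<notin> supp h1" using sub[OF that(2-4)] ns unfolding C_def X_def by auto
  qed (use that in auto)
  obtain t where t: "t > 0" "t \<notin> C" using CU CX XS unfolding C_def X_def by auto
  have xC: "x \<in> C" unfolding C_def using xX' by simp
  have ends: "(\<exists>a. 0<a \<and> a<x \<and> a\<notin>X \<and> {a<..x} \<subseteq> X) \<or> (\<exists>b. x<b \<and> b\<notin>X \<and> {x..<b} \<subseteq> X)"
  proof (cases "t < x")
    case True
    have "\<not> {t..x} \<subseteq> X"
    proof
      assume "{t..x} \<subseteq> X"
      then have "{t..x} \<subseteq> C" using sub[of "{t..x}"] True by auto
      moreover have "t \<in> {t..x}" using True by auto
      ultimately show False using t by blast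
    qed
    then obtain s where "s \<in> {t..x}" "s \<notin> X" by blast
    then show ?thesis using left_end[OF openX xX', of s] xX' t by (cases "s = x") auto
  next
    case False
    then have tx: "t > x" using t xC by (cases "t = x") auto
    have "\<not> {x..t} \<subseteq> X"
    proof
      assume "{x..t} \<subseteq> X"
      then have "{x..t} \<subseteq> C" using sub[of "{x..t}"] tx by auto
      moreover have "t \<in> {x..t}" using tx by auto
      ultimately show False using t by blast
    qed
    then obtain s where "s \<in> {x..t}" "s \<notin> X" by blast
    then show ?thesis using right_end[OF openX xX', of s] xX' by (cases "s = x") auto
  qed
  show False
  proof (cases "\<exists>a. 0<a \<and> a<x \<and> a\<notin>X \<and> {a<..x} \<subseteq> X")
    case LA: True
    then obtain a where a: "0<a" "a<x" "a\<notin>X" "{a<..x} \<subseteq> X" by blast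
    show False
    proof (cases "\<exists>b. x<b \<and> b\<notin>X \<and> {x..<b} \<subseteq> X")
      case True
      then obtain b where b: "x<b" "b\<notin>X" "{x..<b} \<subseteq> X" by blast
      have JX: "{a<..<b} \<subseteq> X" using a b by fastforce
      obtain c d where cd: "\<forall>t\<in>{a<..<b}. h1 t = c*t + d"
        using aff[of "{a<..<b}"] JX a b by auto
      have ha: "h1 a = c*a+d" using endpt_right[OF isC1[OF a(1)] _ cd] a b by auto
      have hb: "h1 b = c*b+d" using endpt_left[OF isC1 _ cd] a b by auto
      define lam where "lam = (x - a)/(b-a)"
      have lam: "0 \<le> lam" "lam \<le> 1" using a b unfolding lam_def by (auto simp: field_simps)
      have "lam * (b - a) = x - a" using a b unfolding lam_def by simp
      then have xeq: "(1 - lam) *\<^sub>R a + lam *\<^sub>R b = x" by (simp add: algebra_simps)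
      have "h2 x \<le> (1 - lam) * h2 a + lam * h2 b"
        using convex_onD[OF conv2 lam, of a b] a b xeq by auto
      also have "\<dots> \<le> (1 - lam) * h1 a + lam * h1 b"
        using ge[of a] ge[of b] a b lam by (intro add_mono mult_left_mono) auto
      also have "\<dots> = c * ((1 - lam) *\<^sub>R a + lam *\<^sub>R b) + d" using ha hb by (simp add: algebra_simps)
      also have "\<dots> = h1 x" using xeq cd a b by auto
      finally show False using lt[OF xX'] by auto
    next
      case NRB: False
      have JX: "{a<..} \<subseteq> X"
      proof
        fix u assume u: "u \<in> {a<..}"
        show "u \<in> X"
        proof (cases "u \<le> x")
          case True then show ?thesis using a u by auto
        next
          case False then show ?thesis using right_end[OF openX xX', of u] NRB by auto
        qed
      qed
      obtain c d where cd: "\<forall>t\<in>{a<..}. h1 t = c*t + d"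
        using aff[of "{a<..}"] JX a by auto
      have ha: "h1 a = c*a+d" using endpt_right[OF isC1[OF a(1)] a(2), of c d] cd by auto
      have "h2 x \<le> h2 a" using dec2 a by auto
      moreover have "h2 a \<le> h1 a" using ge a by auto
      moreover have "h1 x = c*x+d" using cd a by auto
      ultimately have "c*x < c*a" using lt[OF xX'] ha by auto
      then have c0: "c < 0" using a(2)
        by (metis linorder_not_less mult_left_mono less_imp_le not_less)
      obtain M where M: "\<forall>y\<in>h1 ` {0<..}. \<bar>y\<bar> \<le> M" using bdd1 bounded_real by metis
      define u where "u = x + (M + \<bar>d\<bar>)/(-c)"
      have M0: "M \<ge> 0" using M x0 by force
      have ux: "u \<ge> x" proof -
        have "0 \<le> (M + \<bar>d\<bar>)/(-c)" using c0 M0 by (intro divide_nonneg_pos) auto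
        then show ?thesis unfolding u_def by linarith
      qed
      have "c*u = c*x - (M + \<bar>d\<bar>)" unfolding u_def using c0 by (simp add: field_simps)
      moreover have "c*x < 0" using c0 x0 by (simp add: mult_neg_pos)
      moreover have "h1 u = c*u+d" using cd ux a by auto
      moreover have "\<bar>h1 u\<bar> \<le> M" using M ux x0 by auto
      ultimately show False by linarith
    qed
  next
    case NLA: False
    then obtain b where b: "x<b" "b\<notin>X" "{x..<b} \<subseteq> X" using ends by blast
    have JX: "{0<..<b} \<subseteq> X"
    proof
      fix u assume u: "u \<in> {0<..<b}"
      show "u \<in> X"
      proof (cases "x \<le> u")
        case True then show ?thesis using b u by auto
      next
        case False then show ?thesis using left_end[OF openX xX', of u] NLA u by auto
      qed
    qed
    obtain c d where cd: "\<forall>t\<in>{0<..<b}. h1 t = c*t + d"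
      using aff[of "{0<..<b}"] JX b x0 by auto
    have hb: "h1 b = c*b+d" using endpt_left[OF isC1 _ cd] b x0 by auto
    have "eventually (\<lambda>t. h1 t = c*t+d) (at_right 0)"
      using eventually_at_right_real[of 0 b] b x0 cd by (auto elim: eventually_mono)
    then have "((\<lambda>t. c*t+d) \<longlongrightarrow> L) (at_right 0)" using lim1 by (rule Lim_transform_eventually[rotated])
    moreover have "((\<lambda>t. c*t+d) \<longlongrightarrow> d) (at_right 0)" by (auto intro!: tendsto_eq_intros)
    ultimately have Ld: "L = d" using tendsto_unique trivial_limit_at_right_real by blast
    define f where "f = (\<lambda>e. (1 - (x-e)/(b-e)) * h2 e + (x-e)/(b-e) * (c*b+d))"
    have "(f \<longlongrightarrow> (1 - (x-0)/(b-0)) * L + (x-0)/(b-0) * (c*b+d)) (at_right 0)"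
      unfolding f_def using b x0 by (intro tendsto_intros lim2 tendsto_ident_at) auto
    moreover have "(1 - (x-0)/(b-0)) * L + (x-0)/(b-0) * (c*b+d) = c*x+d"
      using b x0 Ld by (simp add: field_simps)
    ultimately have flim: "(f \<longlongrightarrow> c*x+d) (at_right 0)" by simp
    have "eventually (\<lambda>e. h2 x \<le> f e) (at_right 0)"
      using eventually_at_right_real[OF x0]
    proof (rule eventually_mono)
      fix e assume e: "e \<in> {0<..<x}"
      define lam where "lam = (x - e)/(b-e)"
      have lam: "0 \<le> lam" "lam \<le> 1" using e b unfolding lam_def by (auto simp: field_simps)
      have "lam * (b - e) = x - e" using e b unfolding lam_def by simp
      then have xeq: "(1 - lam) *\<^sub>R e + lam *\<^sub>R b = x" by (simp add: algebra_simps)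
      have "h2 x \<le> (1 - lam) * h2 e + lam * h2 b"
        using convex_onD[OF conv2 lam, of e b] e b x0 xeq by auto
      also have "\<dots> \<le> (1 - lam) * h2 e + lam * (c*b+d)"
        using ge[of b] b x0 lam hb by (intro add_mono mult_left_mono) auto
      finally show "h2 x \<le> f e" unfolding f_def lam_def .
    qed
    then have "h2 x \<le> c*x+d" using tendsto_lowerbound[OF flim] by auto
    moreover have "h1 x = c*x+d" using cd b x0 by auto
    ultimately show False using lt[OF xX'] by auto
  qed
qed

theorem proposition6p5:
  fixes h1 h2 :: "real \<Rightarrow> real"
  assumes conv1: "convex_on {0<..} h1" and conv2: "convex_on {0<..} h2"
    and bdd1: "bounded (h1 ` {0<..})" and bdd2: "bounded (h2 ` {0<..})"
    and dec1: "\<forall>x\<in>{0<..}. \<forall>y\<in>{0<..}. x \<le> y \<longrightarrow> h1 y \<le> h1 x"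
    and dec2: "\<forall>x\<in>{0<..}. \<forall>y\<in>{0<..}. x \<le> y \<longrightarrow> h2 y \<le> h2 x"
    and lim: "\<exists>L. (h1 \<longlongrightarrow> L) (at_right 0) \<and> (h2 \<longlongrightarrow> L) (at_right 0)"
  shows "(\<forall>x\<in>Xset h1 h2. connected_component_set (Xset h1 h2) x \<noteq> {0<..} \<longrightarrow>
            connected_component_set (Xset h1 h2) x \<inter> supp h1 \<noteq> {})
       \<and> (\<forall>x\<in>Xset h2 h1. connected_component_set (Xset h2 h1) x \<noteq> {0<..} \<longrightarrow>
            connected_component_set (Xset h2 h1) x \<inter> supp h2 \<noteq> {})"
proof -
  obtain L where L: "(h1 \<longlongrightarrow> L) (at_right 0)" "(h2 \<longlongrightarrow> L) (at_right 0)" using lim by blast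
  show ?thesis
  proof (intro conjI ballI impI)
    fix x assume "x \<in> Xset h1 h2" "connected_component_set (Xset h1 h2) x \<noteq> {0<..}"
    then show "connected_component_set (Xset h1 h2) x \<inter> supp h1 \<noteq> {}"
      using main[OF conv1 conv2 bdd1 dec2 L] by blast
  next
    fix x assume "x \<in> Xset h2 h1" "connected_component_set (Xset h2 h1) x \<noteq> {0<..}"
    then show "connected_component_set (Xset h2 h1) x \<inter> supp h2 \<noteq> {}"
      using main[OF conv2 conv1 bdd2 dec1 L(2) L(1)] by blast
  qed
qed

end
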